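(* Suppose $0<\delta<2$ and $U,\tilde U\in C^1(-1,-1+\delta]\cap C^0[-1,-1+\delta]$ satisfy $$(1-x^2)U'+2xU+\tfrac12U^2\ge(1-x^2)\tilde U'+2x\tilde U+\tfrac12\tilde U^2,\quad -1<x<-1+\delta.$$ Suppose also that one of the following holds: (i) $U(-1)\ge\tilde U(-1)>2$; (ii) $U(-1)=\tilde U(-1)=2$ and $\limsup_{x\to-1^+}\int_{-1+\delta}^x\frac{-2+U(s)}{1-s^2}\,ds<+\infty$. Then either $U>\tilde U$ in $(-1,-1+\delta)$, or there exists $\delta'\in(0,\delta)$ such that $U\equiv\tilde U$ in $(-1,-1+\delta')$. *)

theory Defs
  imports "HOL-Analysis.Analysis"
begin

definition C1_on :: "real set \<Rightarrow> (real \<Rightarrow> real) \<Rightarrow> bool" where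
  "C1_on S f \<longleftrightarrow> (\<exists>f'. (\<forall>x\<in>S. (f has_real_derivative f' x) (at x within S)) \<and> continuous_on S f')"

end

theory Submission imports Defs begin
lemma F_deriv:
  fixes f :: "real \<Rightarrow> real"
  assumes "continuous_on {l<..b} f" "l < x" "x < b"
  shows "((\<lambda>y. integral {y..b} f) has_real_derivative - f x) (at x)"
proof -
  define c where "c = (l + x) / 2"
  have cc: "continuous_on {c..b} f" by (rule continuous_on_subset[OF assms(1)]) (use assms in \<open>auto simp: c_def\<close>)
  have "((\<lambda>y. integral {y..b} f) has_real_derivative - f x) (at x within {c..b})"
    using assms by (intro integral_has_real_derivative' cc) (auto simp: c_def)
  moreover have "at x within {c..b} = at x" using assms by (intro at_within_Icc_at) (auto simp: c_def)
  ultimately show ?thesis by simp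
qed

lemma C1_deriv:
  assumes "C1_on {l<..b} U"
  obtains U' where "\<And>x. l < x \<Longrightarrow> x < b \<Longrightarrow> (U has_real_derivative U' x) (at x)"
proof -
  obtain U' where h: "\<forall>x\<in>{l<..b}. (U has_real_derivative U' x) (at x within {l<..b})"
    using assms unfolding C1_on_def by blast
  have *: "(U has_real_derivative U' x) (at x)" if "l < x" "x < b" for x
  proof -
    have h1: "(U has_real_derivative U' x) (at x within {l<..b})" using h that by simp
    have "(U has_real_derivative U' x) (at x within {l<..<b})"
      by (rule has_field_derivative_subset[OF h1]) auto
    moreover have "at x within {l<..<b} = at x" using that by (intro at_within_open) auto
    ultimately show ?thesis by simp
  qed
  show ?thesis using * by (rule that)
qed

theorem lemma2p4:
  fixes \<delta> :: real and U Ut :: "real \<Rightarrow> real"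
  assumes "0 < \<delta>" "\<delta> < 2"
    and "C1_on {-1<..-1+\<delta>} U" "continuous_on {-1..-1+\<delta>} U"
    and "C1_on {-1<..-1+\<delta>} Ut" "continuous_on {-1..-1+\<delta>} Ut"
    and "\<forall>x\<in>{-1<..<-1+\<delta>}.
           (1 - x^2) * deriv U x + 2 * x * U x + U x ^ 2 / 2
           \<ge> (1 - x^2) * deriv Ut x + 2 * x * Ut x + Ut x ^ 2 / 2"
    and "(U (-1) \<ge> Ut (-1) \<and> Ut (-1) > 2) \<or>
         (U (-1) = 2 \<and> Ut (-1) = 2 \<and>
          Limsup (at_right (-1))
            (\<lambda>x. ereal (integral {-1+\<delta>..x} (\<lambda>s. (-2 + U s) / (1 - s^2))
                        - integral {x..-1+\<delta>} (\<lambda>s. (-2 + U s) / (1 - s^2)))) < \<infinity>)"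
  shows "(\<forall>x\<in>{-1<..<-1+\<delta>}. U x > Ut x) \<or>
         (\<exists>\<delta>'. 0 < \<delta>' \<and> \<delta>' < \<delta> \<and> (\<forall>x\<in>{-1<..<-1+\<delta>'}. U x = Ut x))"
proof -
  define b where "b = -1 + \<delta>"
  have b: "-1 < b" "b < 1" using assms(1,2) by (auto simp: b_def)
  obtain U' where dU: "\<And>x. -1 < x \<Longrightarrow> x < b \<Longrightarrow> (U has_real_derivative U' x) (at x)"
    using C1_deriv[OF assms(3)[folded b_def]] by blast
  obtain Ut' where dUt: "\<And>x. -1 < x \<Longrightarrow> x < b \<Longrightarrow> (Ut has_real_derivative Ut' x) (at x)"
    using C1_deriv[OF assms(5)[folded b_def]] by blast
  have cU: "continuous_on {-1<..b} U" using assms(4) unfolding b_def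
    by (rule continuous_on_subset) auto
  have cUt: "continuous_on {-1<..b} Ut" using assms(6) unfolding b_def
    by (rule continuous_on_subset) auto
  have den: "1 - x^2 > 0" if "-1 < x" "x \<le> b" for x :: real
  proof -
    have "\<bar>x\<bar> < 1" using that b by auto
    then have "x^2 < 1" by (simp add: abs_square_less_1)
    then show ?thesis by simp
  qed
  have den': "1 - x^2 \<noteq> 0" if "x \<in> {-1<..b}" for x :: real using den[of x] that by auto
  define a where "a x = (2*x + (U x + Ut x)/2) / (1 - x^2)" for x
  define w where "w x = U x - Ut x" for x
  have ca: "continuous_on {-1<..b} a" unfolding a_def
    by (intro continuous_intros cU cUt) (use den' in auto)
  have key: "U' x - Ut' x + a x * w x \<ge> 0" if "-1 < x" "x < b" for x
  proof -
    have eqs: "deriv U x = U' x" "deriv Ut x = Ut' x" using dU dUt that by (auto intro: DERIV_imp_deriv)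
    have xm: "x \<in> {-1<..<-1+\<delta>}" using that b_def by auto
    have ineq: "(1 - x^2) * U' x + 2 * x * U x + U x ^ 2 / 2
           \<ge> (1 - x^2) * Ut' x + 2 * x * Ut x + Ut x ^ 2 / 2"
      using assms(7)[rule_format, OF xm] unfolding eqs .
    have d: "1 - x^2 > 0" using den that by auto
    have ax: "(1 - x^2) * a x = 2*x + (U x + Ut x)/2" unfolding a_def using d by simp
    have "(1 - x^2) * (U' x - Ut' x + a x * w x) = (1 - x^2) * (U' x - Ut' x) + ((1 - x^2) * a x) * (U x - Ut x)"
      unfolding w_def by (simp add: algebra_simps)
    also have "\<dots> = ((1 - x^2) * U' x + 2 * x * U x + U x ^ 2 / 2)
       - ((1 - x^2) * Ut' x + 2 * x * Ut x + Ut x ^ 2 / 2)"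
      unfolding ax by (simp add: field_simps power2_eq_square)
    finally have "(1 - x^2) * (U' x - Ut' x + a x * w x) = ((1 - x^2) * U' x + 2 * x * U x + U x ^ 2 / 2)
       - ((1 - x^2) * Ut' x + 2 * x * Ut x + Ut x ^ 2 / 2)" .
    then have "(1 - x^2) * (U' x - Ut' x + a x * w x) \<ge> 0" using ineq by simp
    then show ?thesis using d by (simp add: zero_le_mult_iff)
  qed
  define F where "F y = integral {y..b} a" for y
  have dF: "(F has_real_derivative - a x) (at x)" if "-1 < x" "x < b" for x
    unfolding F_def using F_deriv[OF ca that] .
  define E where "E x = exp (- F x) * w x" for x
  have dE: "(E has_real_derivative exp (- F x) * (U' x - Ut' x + a x * w x)) (at x)"
    if "-1 < x" "x < b" for x
  proof -
    have d1: "((\<lambda>y. exp (- F y)) has_real_derivative exp (- F x) * (- (- a x))) (at x)"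
      by (rule DERIV_chain2[OF DERIV_exp DERIV_minus[OF dF[OF that]]])
    have d2: "(w has_real_derivative U' x - Ut' x) (at x)"
      unfolding w_def[abs_def] by (rule DERIV_diff[OF dU[OF that] dUt[OF that]])
    have Eeq: "E = (\<lambda>y. exp (- F y) * w y)" by (simp add: fun_eq_iff E_def)
    show ?thesis using DERIV_mult[OF d1 d2] unfolding Eeq by (simp add: algebra_simps)
  qed
  have monoE: "E x \<le> E y" if "-1 < x" "x \<le> y" "y < b" for x y
    using that(2) 
  proof (rule DERIV_nonneg_imp_nondecreasing)
    fix z assume "x \<le> z" "z \<le> y"
    then have z: "-1 < z" "z < b" using that by auto
    show "\<exists>d. (E has_real_derivative d) (at z) \<and> d \<ge> 0"
      using dE[OF z] key[OF z] by auto
  qed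
  have tw: "(w \<longlongrightarrow> w (-1)) (at_right (-1))"
  proof -
    have "continuous_on {-1..b} w" unfolding w_def b_def using assms(4,6) by (intro continuous_intros)
    then have "(w \<longlongrightarrow> w (-1)) (at (-1) within {-1..b})"
      using b by (auto simp: continuous_on_def)
    then show ?thesis using at_within_Icc_at_right[of "-1" b] b by simp
  qed
  have w0: "w (-1) \<ge> 0" using assms(8) unfolding w_def by auto
  have nonneg: "w x \<ge> 0" if x: "-1 < x" "x < b" for x
  proof (rule ccontr)
    assume "\<not> w x \<ge> 0"
    then have wx: "w x < 0" by simp
    have Ex: "E x < 0" using wx unfolding E_def by (simp add: mult_pos_neg)
    have wneg: "w y < 0" if "-1 < y" "y \<le> x" for y
    proof -
      have "E y < 0" using monoE[of y x] that x Ex by auto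
      then show ?thesis unfolding E_def by (simp add: mult_less_0_iff)
    qed
    have "\<exists>K. eventually (\<lambda>y. F y \<ge> K) (at_right (-1))"
    proof (cases "U (-1) \<ge> Ut (-1) \<and> Ut (-1) > 2")
      case True
      define N where "N y = 2*y + (U y + Ut y)/2" for y
      have "continuous_on {-1..b} N" unfolding N_def b_def using assms(4,6) by (intro continuous_intros) auto
      then have "(N \<longlongrightarrow> N (-1)) (at (-1) within {-1..b})"
        using b by (auto simp: continuous_on_def)
      then have tN: "(N \<longlongrightarrow> N (-1)) (at_right (-1))" using at_within_Icc_at_right[of "-1" b] b by simp
      have "N (-1) > 0" using True unfolding N_def by simp
      then have "eventually (\<lambda>y. N y > 0) (at_right (-1))" using order_tendstoD(1)[OF tN] by blast
      then obtain c where c: "c > -1" "\<And>y. y > -1 \<Longrightarrow> y < c \<Longrightarrow> N y > 0"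
        unfolding eventually_at_right_field by blast
      define m where "m = (-1 + min c b) / 2"
      have m: "-1 < m" "m < c" "m < b" using c b by (auto simp: m_def)
      have "F y \<ge> F m" if "-1 < y" "y < m" for y
        using less_imp_le[OF that(2)]
      proof (rule DERIV_nonpos_imp_nonincreasing)
        fix z assume "y \<le> z" "z \<le> m"
        then have z: "-1 < z" "z < b" "z < c" using that m by auto
        have "a z \<ge> 0" unfolding a_def using c(2)[of z] z den[of z]
          by (simp add: N_def)
        then show "\<exists>d. (F has_real_derivative d) (at z) \<and> d \<le> 0"
          using dF[OF z(1,2)] by auto
      qed
      then have "eventually (\<lambda>y. F y \<ge> F m) (at_right (-1))"
        unfolding eventually_at_right_field using m by blast
      then show ?thesis by blast
    next
      case False
      then have h2: "U (-1) = 2" "Ut (-1) = 2" and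
        ls: "Limsup (at_right (-1))
            (\<lambda>x. ereal (integral {-1+\<delta>..x} (\<lambda>s. (-2 + U s) / (1 - s^2))
                        - integral {x..-1+\<delta>} (\<lambda>s. (-2 + U s) / (1 - s^2)))) < \<infinity>"
        using assms(8) by auto
      define h where "h s = (-2 + U s) / (1 - s^2)" for s
      define H where "H y = integral {y..b} h" for y
      obtain M where M: "Limsup (at_right (-1))
            (\<lambda>x. ereal (integral {-1+\<delta>..x} (\<lambda>s. (-2 + U s) / (1 - s^2))
                        - integral {x..-1+\<delta>} (\<lambda>s. (-2 + U s) / (1 - s^2)))) < ereal M"
        using ereal_dense2[OF ls] by blast
      have ev1: "eventually (\<lambda>y. ereal (integral {b..y} h - H y) < ereal M) (at_right (-1))"
        using Limsup_lessD[OF M] unfolding h_def H_def b_def by simp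
      have ev2: "eventually (\<lambda>y. y < x) (at_right (-1))"
        unfolding eventually_at_right_field using x by blast
      have ch: "continuous_on {-1<..b} h" unfolding h_def
        by (intro continuous_intros cU) (use den' in auto)
      have dH: "(H has_real_derivative - h z) (at z)" if "-1 < z" "z < b" for z
        unfolding H_def using F_deriv[OF ch that] .
      have FH: "F y - H y \<ge> F x - H x" if "-1 < y" "y < x" for y
        using less_imp_le[OF that(2)]
      proof (rule DERIV_nonpos_imp_nonincreasing[where f = "\<lambda>y. F y - H y"])
        fix z assume "y \<le> z" "z \<le> x"
        then have z: "-1 < z" "z < b" "z \<le> x" using that x by auto
        have wz: "w z < 0" using wneg z by auto
        have dz: "1 - z^2 > 0" using den z by auto
        have e1: "a z - h z = ((2*z + (U z + Ut z)/2) - (-2 + U z)) / (1 - z^2)"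
          unfolding a_def h_def by (simp add: diff_divide_distrib)
        have e2: "(2*z + (U z + Ut z)/2) - (-2 + U z) = 2*(z+1) + (Ut z - U z)/2" by simp
        have p: "2*(z+1) + (Ut z - U z)/2 > 0" proof -
          have "(Ut z - U z)/2 > 0" using wz unfolding w_def by simp
          then show ?thesis using z by (smt (verit))
        qed
        have "a z - h z > 0" unfolding e1 e2 by (rule divide_pos_pos[OF p dz])
        then show "\<exists>d. ((\<lambda>y. F y - H y) has_real_derivative d) (at z) \<and> d \<le> 0"
          using DERIV_diff[OF dF[OF z(1,2)] dH[OF z(1,2)]] by auto
      qed
      have "eventually (\<lambda>y. F y \<ge> F x - H x - M) (at_right (-1))"
        using ev1 ev2 eventually_at_right_less[of "-1::real"]
      proof eventually_elim
        case (elim y)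
        have "integral {b..y} h = 0" using elim x by simp
        then have "- H y < M" using elim by simp
        moreover have "-1 < y" using elim by simp
        ultimately show ?case using FH[of y] elim by simp
      qed
      then show ?thesis by blast
    qed
    then obtain K where K: "eventually (\<lambda>y. F y \<ge> K) (at_right (-1))" by blast
    have ev3: "eventually (\<lambda>y. -1 < y \<and> y < x) (at_right (-1))"
      unfolding eventually_at_right_field using x by blast
    have "eventually (\<lambda>y. w y \<le> E x * exp K) (at_right (-1))"
      using K ev3
    proof eventually_elim
      case (elim y)
      have "E y \<le> E x" using monoE[of y x] elim x by auto
      have "w y = E y * exp (F y)" unfolding E_def by (simp add: exp_minus field_simps)
      also have "\<dots> \<le> E x * exp (F y)" using \<open>E y \<le> E x\<close> by simp
      also have "\<dots> \<le> E x * exp K" using Ex elim by (simp add: mult_le_cancel_left)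
      finally show ?case .
    qed
    then have "w (-1) \<le> E x * exp K" using tendsto_upperbound[OF tw] by simp
    moreover have "E x * exp K < 0" using Ex by (simp add: mult_neg_pos)
    ultimately show False using w0 by simp
  qed
  show ?thesis
  proof (cases "\<forall>x\<in>{-1<..<-1+\<delta>}. U x > Ut x")
    case True then show ?thesis by blast
  next
    case False
    then obtain x1 where x1: "-1 < x1" "x1 < b" "\<not> Ut x1 < U x1" by (auto simp: b_def)
    then have "w x1 = 0" using nonneg[OF x1(1,2)] unfolding w_def by simp
    then have E1: "E x1 = 0" unfolding E_def by simp
    have "U y = Ut y" if "y \<in> {-1<..<-1+(x1+1)}" for y
    proof -
      have y: "-1 < y" "y < x1" using that by auto
      have "E y \<le> 0" using monoE[of y x1] y x1 E1 by auto
      then have "w y \<le> 0" unfolding E_def by (simp add: mult_le_0_iff)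
      moreover have "w y \<ge> 0" using nonneg y x1 by auto
      ultimately show ?thesis unfolding w_def by simp
    qed
    moreover have "0 < x1 + 1" "x1 + 1 < \<delta>" using x1 by (auto simp: b_def)
    ultimately show ?thesis by blast
  qed
qed
end
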